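(* Let $k>t+1$, $n>2k-t$, and let $\mathcal{S}_a$ be a maximal set of $k$-spaces in $\mathrm{AG}(n,q)$ pairwise intersecting in at least a $t$-space. Let $\psi(\mathcal{S}_a)=\min\{\dim T: T\text{ an affine subspace},\ \dim(T\cap\alpha)\geq t\ \forall\alpha\in\mathcal{S}_a\}$. If $\psi(\mathcal{S}_a)=t+x$ with $x\geq 2$, then \[|\mathcal{S}_a|\leq q^x\left[{t+x\atop x}\right]_q(\theta_{k-t})^x\left[{n-t-x\atop k-t-x}\right]_q.\]
   Context: Affine subspaces intersect in at least a $t$-space if their affine intersection has dimension at least $t$. $\left[{n\atop k}\right]_q=\frac{(q^n-1)\cdots(q^{n-k+1}-1)}{(q^k-1)\cdots(q-1)}$ for $k>0$, $=1$ for $k=0$; $\theta_m=\frac{q^{m+1}-1}{q-1}$. Maximal means no further affine $k$-space can be added keeping the property. *)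

theory Defs
  imports "HOL-Analysis.Analysis"
begin

text \<open>Points of AG(n,q) are vectors in F^'n with F a finite field, q = CARD(F), n = CARD('n).\<close>

definition affine_subspace :: "('a::field ^ 'n) set \<Rightarrow> bool" where
  "affine_subspace S \<longleftrightarrow> (\<exists>p W. vec.subspace W \<and> S = (\<lambda>w. p + w) ` W)"

definition adim :: "('a::field ^ 'n) set \<Rightarrow> nat" where
  "adim S = vec.dim {x - y | x y. x \<in> S \<and> y \<in> S}"

definition kspace :: "nat \<Rightarrow> ('a::field ^ 'n) set \<Rightarrow> bool" where
  "kspace k S \<longleftrightarrow> affine_subspace S \<and> adim S = k"

text \<open>Two affine subspaces intersect in at least a t-space (empty intersection has dimension -1).\<close>
definition meets_t :: "nat \<Rightarrow> ('a::field ^ 'n) set \<Rightarrow> ('a ^ 'n) set \<Rightarrow> bool" where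
  "meets_t t A B \<longleftrightarrow> A \<inter> B \<noteq> {} \<and> adim (A \<inter> B) \<ge> t"

definition max_t_intersecting :: "nat \<Rightarrow> nat \<Rightarrow> ('a::field ^ 'n) set set \<Rightarrow> bool" where
  "max_t_intersecting k t SS \<longleftrightarrow>
     (\<forall>A\<in>SS. kspace k A) \<and> (\<forall>A\<in>SS. \<forall>B\<in>SS. meets_t t A B) \<and>
     (\<forall>B. kspace k B \<and> B \<notin> SS \<longrightarrow> \<not> (\<forall>A\<in>SS. meets_t t A B))"

definition psi :: "nat \<Rightarrow> ('a::field ^ 'n) set set \<Rightarrow> nat" where
  "psi t SS = (LEAST d. \<exists>T. affine_subspace T \<and> adim T = d \<and> (\<forall>A\<in>SS. meets_t t T A))"

definition qbinom :: "nat \<Rightarrow> nat \<Rightarrow> nat \<Rightarrow> real" where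
  "qbinom q n k = (if k = 0 then 1 else
     (\<Prod>i<k. (real q ^ (n - i) - 1)) / (\<Prod>i<k. (real q ^ (i + 1) - 1)))"

definition theta :: "nat \<Rightarrow> nat \<Rightarrow> real" where
  "theta q m = (real q ^ (m + 1) - 1) / (real q - 1)"

end

theory Submission
  imports Defs
begin


lemma card_span_indep:
  fixes B :: "('a::{finite,field} ^ 'n) set"
  shows "finite B \<Longrightarrow> vec.independent B \<Longrightarrow> card (vec.span B) = CARD('a) ^ card B"
proof (induction B rule: finite_induct)
  case empty
  then show ?case by simp
next
  case (insert v B)
  have indB: "vec.independent B" and vB: "v \<notin> vec.span B"
    using insert.prems insert.hyps by (auto simp: vec.independent_insert)
  have eq: "vec.span (insert v B) = (\<lambda>(c,y). c *s v + y) ` (UNIV \<times> vec.span B)"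
  proof (rule set_eqI, rule iffI)
    fix z assume "z \<in> vec.span (insert v B)"
    then obtain c where "z - c *s v \<in> vec.span B" by (auto simp: vec.span_insert)
    then show "z \<in> (\<lambda>(c,y). c *s v + y) ` (UNIV \<times> vec.span B)"
      by (intro image_eqI[where x="(c, z - c *s v)"]) auto
  next
    fix z assume "z \<in> (\<lambda>(c,y). c *s v + y) ` (UNIV \<times> vec.span B)"
    then obtain c y where "z = c *s v + y" "y \<in> vec.span B" by auto
    then have "z - c *s v \<in> vec.span B" by simp
    then show "z \<in> vec.span (insert v B)"
      by (auto simp: vec.span_insert)
  qed
  have inj: "inj_on (\<lambda>(c,y). c *s v + y) (UNIV \<times> vec.span B)"
  proof (rule inj_onI, clarsimp)
    fix c1 y1 c2 y2 assume y1: "y1 \<in> vec.span B" and y2: "y2 \<in> vec.span B"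
      and e: "c1 *s v + y1 = c2 *s v + y2"
    show "c1 = c2 \<and> y1 = y2"
    proof (cases "c1 = c2")
      case True then show ?thesis using e by simp
    next
      case False
      have "(c1 - c2) *s v = y2 - y1" using e
        by (simp add: vec.scale_left_diff_distrib algebra_simps)
      then have "inverse (c1 - c2) *s ((c1 - c2) *s v) = inverse (c1 - c2) *s (y2 - y1)" by simp
      moreover have "inverse (c1 - c2) *s ((c1 - c2) *s v) = v"
        using False by (simp only: vec.scale_scale) simp
      ultimately have "v = inverse (c1 - c2) *s (y2 - y1)" by simp
      moreover have "inverse (c1 - c2) *s (y2 - y1) \<in> vec.span B"
        using y1 y2 by (intro vec.span_scale vec.span_diff) auto
      ultimately show ?thesis using vB by simp
    qed
  qed
  have "card (vec.span (insert v B)) = card ((UNIV :: 'a set) \<times> vec.span B)"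
    by (subst eq) (rule card_image[OF inj])
  also have "\<dots> = CARD('a) * card (vec.span B)" by (simp add: card_cartesian_product)
  finally show ?case using insert.IH[OF indB] insert.hyps by simp
qed

lemma card_subspace:
  fixes S :: "('a::{finite,field} ^ 'n) set"
  assumes "vec.subspace S"
  shows "card S = CARD('a) ^ vec.dim S"
proof -
  obtain B where B: "B \<subseteq> S" "vec.independent B" "S \<subseteq> vec.span B" "card B = vec.dim S"
    by (rule vec.basis_exists)
  have "vec.span B = S" using B assms by (simp add: vec.span_subspace)
  moreover have "finite B" using B(2) vec.indep_card_eq_dim_span by blast
  ultimately show ?thesis using card_span_indep[of B] B by simp
qed



lemma card_field_ge2: "2 \<le> CARD('a::{finite,field})"
proof -
  have "card {0::'a, 1} = 2" by simp
  moreover have "card {0::'a, 1} \<le> CARD('a)" by (rule card_mono) auto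
  ultimately show ?thesis by simp
qed

lemma dim_span_insert_sub:
  fixes V :: "('a::{finite,field} ^ 'n) set"
  assumes "vec.subspace V" "u \<notin> V"
  shows "vec.dim (vec.span (insert u V)) = vec.dim V + 1"
proof -
  have "vec.span V = V" using assms(1) by (simp add: vec.span_eq_iff)
  then have "u \<notin> vec.span V" using assms(2) by metis
  then show ?thesis by (simp add: vec.dim_span vec.dim_insert)
qed

lemma dim_insert_sub:
  fixes V :: "('a::{finite,field} ^ 'n) set"
  assumes "vec.subspace V" "u \<notin> V"
  shows "vec.dim (insert u V) = vec.dim V + 1"
  using dim_span_insert_sub[OF assms] by (simp add: vec.dim_span)

lemma span_insert_sub_le:
  fixes V :: "('a::{finite,field} ^ 'n) set"
  assumes "vec.subspace M" "V \<subseteq> M" "u \<in> M"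
  shows "vec.span (insert u V) \<subseteq> M"
  using assms by (intro vec.span_minimal) auto

lemma exists_between:
  fixes V M :: "('a::{finite,field} ^ 'n) set"
  shows "vec.subspace V \<Longrightarrow> vec.subspace M \<Longrightarrow> V \<subseteq> M \<Longrightarrow> vec.dim V \<le> d \<Longrightarrow> d \<le> vec.dim M
    \<Longrightarrow> \<exists>W. vec.subspace W \<and> V \<subseteq> W \<and> W \<subseteq> M \<and> vec.dim W = d"
proof (induction "d - vec.dim V" arbitrary: V)
  case 0
  then show ?case by (intro exI[of _ V]) auto
next
  case (Suc j)
  then have lt: "vec.dim V < vec.dim M" by linarith
  have "\<not> M \<subseteq> V" using lt vec.dim_subset[of M V] by auto
  then obtain u where u: "u \<in> M" "u \<notin> V" by auto
  define V' where "V' = vec.span (insert u V)"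
  have sV': "vec.subspace V'" unfolding V'_def by simp
  have dV': "vec.dim V' = vec.dim V + 1" unfolding V'_def using Suc.prems u
    dim_span_insert_sub[of V u] by simp
  have V'M: "V' \<subseteq> M" unfolding V'_def using Suc.prems u by (intro span_insert_sub_le) auto
  have VV': "V \<subseteq> V'" unfolding V'_def using vec.span_superset by blast
  have h: "j = d - vec.dim V'" "vec.dim V' \<le> d" using Suc.hyps(2) dV' by auto
  from Suc.hyps(1)[OF h(1) sV' Suc.prems(2) V'M h(2) Suc.prems(5)]
  obtain W where "vec.subspace W" "V' \<subseteq> W" "W \<subseteq> M" "vec.dim W = d" by auto
  then show ?case using VV' by blast
qed

lemma span_insert_eq_L:
  fixes V L :: "('a::{finite,field} ^ 'n) set"
  assumes "vec.subspace V" "vec.subspace L" "V \<subseteq> L" "vec.dim L = vec.dim V + 1"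
    "u \<in> L" "u \<notin> V"
  shows "vec.span (insert u V) = L"
proof (rule vec.subspace_dim_equal)
  show "vec.span (insert u V) \<subseteq> L" using assms by (intro span_insert_sub_le) auto
  show "vec.dim L \<le> vec.dim (vec.span (insert u V))"
    using assms dim_span_insert_sub[of V u] by simp
qed (use assms in auto)

lemma card_between:
  fixes V W :: "('a::{finite,field} ^ 'n) set"
  assumes sV: "vec.subspace V" and sW: "vec.subspace W" and VW: "V \<subseteq> W"
  shows "card {L. vec.subspace L \<and> V \<subseteq> L \<and> L \<subseteq> W \<and> vec.dim L = vec.dim V + 1}
           * (CARD('a) ^ (vec.dim V + 1) - CARD('a) ^ vec.dim V)
         = CARD('a) ^ vec.dim W - CARD('a) ^ vec.dim V"
proof -
  define LL where "LL = {L. vec.subspace L \<and> V \<subseteq> L \<and> L \<subseteq> W \<and> vec.dim L = vec.dim V + 1}"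
  have cover: "W - V = (\<Union>L\<in>LL. L - V)"
  proof
    show "W - V \<subseteq> (\<Union>L\<in>LL. L - V)"
    proof
      fix u assume u: "u \<in> W - V"
      have "vec.span (insert u V) \<subseteq> W" using u sW VW by (intro span_insert_sub_le) auto
      moreover have "V \<subseteq> vec.span (insert u V)" using vec.span_superset by blast
      ultimately have "vec.span (insert u V) \<in> LL" unfolding LL_def using u sV
        by (simp add: dim_insert_sub vec.dim_span)
      moreover have "u \<in> vec.span (insert u V) - V" using u by (auto intro: vec.span_base)
      ultimately show "u \<in> (\<Union>L\<in>LL. L - V)" by blast
    qed
    show "(\<Union>L\<in>LL. L - V) \<subseteq> W - V" unfolding LL_def by auto
  qed
  have disj: "\<forall>L1\<in>LL. \<forall>L2\<in>LL. L1 \<noteq> L2 \<longrightarrow> (L1 - V) \<inter> (L2 - V) = {}"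
  proof (intro ballI impI)
    fix L1 L2 assume L: "L1 \<in> LL" "L2 \<in> LL" "L1 \<noteq> L2"
    show "(L1 - V) \<inter> (L2 - V) = {}"
    proof (rule ccontr)
      assume "(L1 - V) \<inter> (L2 - V) \<noteq> {}"
      then obtain u where "u \<in> L1" "u \<in> L2" "u \<notin> V" by auto
      then have "vec.span (insert u V) = L1" "vec.span (insert u V) = L2"
        using L sV unfolding LL_def by (simp_all add: span_insert_eq_L)
      then show False using L by simp
    qed
  qed
  have cardL: "card (L - V) = CARD('a) ^ (vec.dim V + 1) - CARD('a) ^ vec.dim V" if "L \<in> LL" for L
  proof -
    have "card (L - V) = card L - card V" using that unfolding LL_def
      by (intro card_Diff_subset) auto
    then show ?thesis using that sV unfolding LL_def by (simp add: card_subspace)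
  qed
  have "card (W - V) = (\<Sum>L\<in>LL. card (L - V))"
    unfolding cover by (rule card_UN_disjoint) (use disj in auto)
  also have "\<dots> = card LL * (CARD('a) ^ (vec.dim V + 1) - CARD('a) ^ vec.dim V)"
    using cardL by simp
  finally have "card LL * (CARD('a) ^ (vec.dim V + 1) - CARD('a) ^ vec.dim V) = card (W - V)" by simp
  also have "card (W - V) = card W - card V" using VW by (intro card_Diff_subset) auto
  also have "\<dots> = CARD('a) ^ vec.dim W - CARD('a) ^ vec.dim V" using sV sW by (simp add: card_subspace)
  finally show ?thesis unfolding LL_def .
qed

lemma card_between_real:
  fixes V W :: "('a::{finite,field} ^ 'n) set"
  assumes sV: "vec.subspace V" and sW: "vec.subspace W" and VW: "V \<subseteq> W"
    and d: "vec.dim W = vec.dim V + Suc d"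
  shows "real (card {L. vec.subspace L \<and> V \<subseteq> L \<and> L \<subseteq> W \<and> vec.dim L = vec.dim V + 1})
       = theta CARD('a) d"
proof -
  define q where "q = CARD('a)"
  define m where "m = vec.dim V"
  define c where "c = card {L. vec.subspace L \<and> V \<subseteq> L \<and> L \<subseteq> W \<and> vec.dim L = vec.dim V + 1}"
  have q2: "q \<ge> 2" unfolding q_def by (rule card_field_ge2)
  have e: "c * (q ^ (m + 1) - q ^ m) = q ^ (m + Suc d) - q ^ m"
    using card_between[OF sV sW VW] d unfolding c_def q_def m_def by simp
  have le1: "q ^ m \<le> q ^ (m+1)" using q2 by (intro power_increasing) auto
  have le2: "q ^ m \<le> q ^ (m + Suc d)" using q2 by (intro power_increasing) auto
  have "real c * (real q ^ (m + 1) - real q ^ m) = real q ^ (m + Suc d) - real q ^ m"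
    using arg_cong[OF e, of real] le1 le2 by (simp add: of_nat_diff)
  then have "real c * (real q ^ m * (real q - 1)) = real q ^ m * (real q ^ Suc d - 1)"
    by (simp add: algebra_simps power_add)
  then have "real c * (real q - 1) = real q ^ Suc d - 1" using q2 by simp
  then have "real c = (real q ^ Suc d - 1) / (real q - 1)" using q2 by (simp add: field_simps)
  then show ?thesis unfolding theta_def c_def q_def by simp
qed



lemma qbinom_Suc:
  "qbinom q (Suc a) (Suc b) = (real q ^ Suc a - 1) / (real q ^ Suc b - 1) * qbinom q a b"
proof -
  have n: "(\<Prod>i<Suc b. (real q ^ (Suc a - i) - 1)) = (real q ^ Suc a - 1) * (\<Prod>i<b. (real q ^ (a - i) - 1))"
    by (subst prod.lessThan_Suc_shift) simp
  have d: "(\<Prod>i<Suc b. (real q ^ (i + 1) - 1)) = (\<Prod>i<b. (real q ^ (i + 1) - 1)) * (real q ^ Suc b - 1)"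
    by simp
  show ?thesis
  proof (cases "b = 0")
    case True then show ?thesis unfolding qbinom_def by simp
  next
    case False then show ?thesis unfolding qbinom_def n d by simp
  qed
qed

lemma qbinom_nonneg: assumes "q \<ge> 1" shows "qbinom q a b \<ge> 0"
proof -
  have p: "real q ^ e \<ge> 1" for e using assms by (intro one_le_power) simp
  have p2: "real q * real q ^ e \<ge> 1" for e using p[of "Suc e"] by simp
  show ?thesis unfolding qbinom_def
    by (auto intro!: divide_nonneg_nonneg prod_nonneg simp: p p2)
qed

lemma theta_pos: assumes "q \<ge> 2" shows "theta q m > 0"
proof -
  have "real q ^ (m+1) > 1" using assms by (intro one_less_power) auto
  then show ?thesis unfolding theta_def using assms by (intro divide_pos_pos) auto
qed

lemma card_filter_sum:
  "finite A \<Longrightarrow> real (card {x\<in>A. P x}) = (\<Sum>x\<in>A. if P x then 1 else 0)"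
  by (simp add: sum.If_cases Int_def conj_commute)

lemma count_sup:
  fixes V W :: "('a::{finite,field} ^ 'n) set"
  shows "vec.subspace V \<Longrightarrow> vec.subspace W \<Longrightarrow> V \<subseteq> W \<Longrightarrow> vec.dim V \<le> k \<Longrightarrow>
    real (card {U. vec.subspace U \<and> V \<subseteq> U \<and> U \<subseteq> W \<and> vec.dim U = k})
      \<le> qbinom CARD('a) (vec.dim W - vec.dim V) (k - vec.dim V)"
proof (induction "k - vec.dim V" arbitrary: V)
  case 0
  then have kV: "k = vec.dim V" by simp
  have "{U. vec.subspace U \<and> V \<subseteq> U \<and> U \<subseteq> W \<and> vec.dim U = k} \<subseteq> {V}"
  proof
    fix U assume U: "U \<in> {U. vec.subspace U \<and> V \<subseteq> U \<and> U \<subseteq> W \<and> vec.dim U = k}"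
    then have "V = U" using kV 0(2) by (intro vec.subspace_dim_equal) auto
    then show "U \<in> {V}" by simp
  qed
  then have "card {U. vec.subspace U \<and> V \<subseteq> U \<and> U \<subseteq> W \<and> vec.dim U = k} \<le> card {V}"
    by (intro card_mono) auto
  then show ?case using 0 by (simp add: qbinom_def)
next
  case (Suc j)
  define q where "q = CARD('a)"
  define m where "m = vec.dim V"
  define N where "N = vec.dim W"
  have q2: "q \<ge> 2" unfolding q_def by (rule card_field_ge2)
  define UU where "UU = {U. vec.subspace U \<and> V \<subseteq> U \<and> U \<subseteq> W \<and> vec.dim U = k}"
  define LL where "LL = {L. vec.subspace L \<and> V \<subseteq> L \<and> L \<subseteq> W \<and> vec.dim L = m + 1}"
  have mk: "m < k" using Suc.hyps(2) unfolding m_def by linarith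
  show ?case
  proof (cases "k \<le> N")
    case False
    have "UU = {}"
    proof (rule ccontr)
      assume "UU \<noteq> {}"
      then obtain U where "U \<in> UU" by blast
      then have "U \<subseteq> W" "vec.dim U = k" unfolding UU_def by auto
      then have "k \<le> N" unfolding N_def using vec.dim_subset by metis
      then show False using False by simp
    qed
    then have "real (card UU) \<le> qbinom q (N-m) (k-m)" using qbinom_nonneg[of q] q2 by simp
    then show ?thesis unfolding UU_def q_def N_def m_def .
  next
    case True
    have fin: "finite UU" "finite LL" by (rule finite)+
    have swap: "(\<Sum>U\<in>UU. real (card {L\<in>LL. L \<subseteq> U})) = (\<Sum>L\<in>LL. real (card {U\<in>UU. L \<subseteq> U}))"
    proof -
      have "(\<Sum>U\<in>UU. real (card {L\<in>LL. L \<subseteq> U})) = (\<Sum>U\<in>UU. \<Sum>L\<in>LL. if L \<subseteq> U then 1 else 0)"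
        by (intro sum.cong refl card_filter_sum fin)
      also have "\<dots> = (\<Sum>L\<in>LL. \<Sum>U\<in>UU. if L \<subseteq> U then 1 else 0)" by (rule sum.swap)
      also have "\<dots> = (\<Sum>L\<in>LL. real (card {U\<in>UU. L \<subseteq> U}))"
        by (intro sum.cong refl card_filter_sum[symmetric] fin)
      finally show ?thesis .
    qed
    have lhs: "real (card {L\<in>LL. L \<subseteq> U}) = theta q (k - m - 1)" if U: "U \<in> UU" for U
    proof -
      have "{L\<in>LL. L \<subseteq> U} = {L. vec.subspace L \<and> V \<subseteq> L \<and> L \<subseteq> U \<and> vec.dim L = vec.dim V + 1}"
        using U unfolding LL_def UU_def m_def by auto
      moreover have "vec.dim U = vec.dim V + Suc (k - m - 1)" using U mk unfolding UU_def m_def by auto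
      ultimately show ?thesis using card_between_real[of V U "k - m - 1"] U Suc.prems
        unfolding UU_def q_def by simp
    qed
    have rhs: "real (card {U\<in>UU. L \<subseteq> U}) \<le> qbinom q (N - (m+1)) (k - (m+1))" if L: "L \<in> LL" for L
    proof -
      have "{U\<in>UU. L \<subseteq> U} = {U. vec.subspace U \<and> L \<subseteq> U \<and> U \<subseteq> W \<and> vec.dim U = k}"
        using L unfolding LL_def UU_def by auto
      moreover have "j = k - vec.dim L" using L Suc.hyps(2) unfolding LL_def m_def by auto
      ultimately show ?thesis using Suc.hyps(1)[of L] L Suc.prems mk
        unfolding LL_def q_def N_def m_def by auto
    qed
    have cLL: "real (card LL) = theta q (N - m - 1)"
      using card_between_real[of V W "N - m - 1"] Suc.prems mk True
      unfolding LL_def q_def N_def m_def by simp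
    have "real (card UU) * theta q (k - m - 1) = (\<Sum>U\<in>UU. real (card {L\<in>LL. L \<subseteq> U}))"
      using lhs by simp
    also have "\<dots> \<le> (\<Sum>L\<in>LL. qbinom q (N - (m+1)) (k - (m+1)))"
      unfolding swap by (rule sum_mono) (rule rhs)
    also have "\<dots> = theta q (N - m - 1) * qbinom q (N - (m+1)) (k - (m+1))"
      using cLL by simp
    finally have ineq: "real (card UU) * theta q (k - m - 1) \<le> theta q (N - m - 1) * qbinom q (N - (m+1)) (k - (m+1))" .
    have tpos: "theta q (k - m - 1) > 0" using q2 by (rule theta_pos)
    have eqN: "N - m = Suc (N - (m+1))" "k - m = Suc (k - (m+1))" using mk True by auto
    have "qbinom q (N - m) (k - m) = (real q ^ (N - m) - 1) / (real q ^ (k - m) - 1) * qbinom q (N - (m+1)) (k - (m+1))"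
      unfolding eqN by (rule qbinom_Suc)
    also have "(real q ^ (N - m) - 1) / (real q ^ (k - m) - 1) = theta q (N - m - 1) / theta q (k - m - 1)"
    proof -
      have "real q - 1 > 0" using q2 by simp
      moreover have "N - m - 1 + 1 = N - m" "k - m - 1 + 1 = k - m" using mk True by auto
      ultimately show ?thesis unfolding theta_def by simp
    qed
    finally have "qbinom q (N - m) (k - m) = theta q (N - m - 1) / theta q (k - m - 1) * qbinom q (N - (m+1)) (k - (m+1))" .
    moreover have "real (card UU) \<le> theta q (N - m - 1) * qbinom q (N - (m+1)) (k - (m+1)) / theta q (k - m - 1)"
      using ineq tpos by (simp add: pos_le_divide_eq)
    ultimately have "real (card UU) \<le> qbinom q (N - m) (k - m)" by simp
    then show ?thesis unfolding UU_def q_def N_def m_def .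
  qed
qed



definition Fq :: "nat \<Rightarrow> nat \<Rightarrow> real" where
  "Fq q m = (\<Prod>i<m. (real q ^ (i + 1) - 1))"

lemma Fq_pos: "q \<ge> 2 \<Longrightarrow> Fq q m > 0"
  unfolding Fq_def
proof (intro prod_pos ballI)
  fix i assume "q \<ge> 2"
  then have "real q ^ (i+1) > 1" by (intro one_less_power) auto
  then show "real q ^ (i + 1) - 1 > 0" by simp
qed

lemma qbinom_closed: "q \<ge> 2 \<Longrightarrow> qbinom q (a + b) b = Fq q (a + b) / (Fq q b * Fq q a)"
proof (induction b)
  case 0
  have "Fq q a \<noteq> 0" using Fq_pos[OF 0] by (simp add: less_imp_neq[symmetric])
  moreover have "Fq q 0 = 1" by (simp add: Fq_def)
  ultimately show ?case by (simp add: qbinom_def)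
next
  case (Suc b)
  have "qbinom q (a + Suc b) (Suc b) = qbinom q (Suc (a + b)) (Suc b)" by simp
  also have "\<dots> = (real q ^ Suc (a+b) - 1) / (real q ^ Suc b - 1) * qbinom q (a + b) b"
    by (rule qbinom_Suc)
  also have "\<dots> = (real q ^ Suc (a+b) - 1) / (real q ^ Suc b - 1) * (Fq q (a + b) / (Fq q b * Fq q a))"
    using Suc by simp
  also have "\<dots> = Fq q (Suc (a + b)) / (Fq q (Suc b) * Fq q a)"
  proof -
    have "real q ^ Suc b > 1" using Suc.prems by (intro one_less_power) auto
    then have "real q ^ Suc b - 1 \<noteq> 0" by simp
    moreover have "Fq q b \<noteq> 0" "Fq q a \<noteq> 0" using Fq_pos[OF Suc.prems] by (simp_all add: less_imp_neq[symmetric])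
    ultimately show ?thesis unfolding Fq_def by (simp add: field_simps)
  qed
  finally show ?case by simp
qed

lemma qbinom_sym: "q \<ge> 2 \<Longrightarrow> qbinom q (a + b) b = qbinom q (a + b) a"
  using qbinom_closed[of q a b] qbinom_closed[of q b a] by (simp add: add.commute mult.commute)

lemma theta_mono: "q \<ge> 2 \<Longrightarrow> a \<le> b \<Longrightarrow> theta q a \<le> theta q b"
  unfolding theta_def
  by (intro divide_right_mono diff_right_mono power_increasing) auto

definition tr :: "('a::field ^ 'n) \<Rightarrow> ('a ^ 'n) set \<Rightarrow> ('a ^ 'n) set" where
  "tr p W = (\<lambda>w. p + w) ` W"

definition dir :: "('a::field ^ 'n) set \<Rightarrow> ('a ^ 'n) set" where
  "dir S = {x - y | x y. x \<in> S \<and> y \<in> S}"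

lemma adim_dir: "adim S = vec.dim (dir S)"
  unfolding adim_def dir_def ..

lemma dir_tr: "vec.subspace W \<Longrightarrow> dir (tr p W) = W"
  unfolding dir_def tr_def
proof (rule set_eqI, rule iffI)
  fix z assume "vec.subspace W" "z \<in> {x - y |x y. x \<in> (+) p ` W \<and> y \<in> (+) p ` W}"
  then show "z \<in> W" by (auto intro: vec.subspace_diff)
next
  fix z assume W: "vec.subspace W" "z \<in> W"
  have "z = (p + z) - (p + 0)" by simp
  moreover have "0 \<in> W" using W vec.subspace_0 by blast
  ultimately show "z \<in> {x - y |x y. x \<in> (+) p ` W \<and> y \<in> (+) p ` W}" using W by blast
qed

lemma adim_tr: "vec.subspace W \<Longrightarrow> adim (tr p W) = vec.dim W"
  by (simp add: adim_dir dir_tr)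

lemma tr_mem_self: "vec.subspace W \<Longrightarrow> p \<in> tr p W"
  unfolding tr_def using vec.subspace_0 by force

lemma tr_mem_iff: "c \<in> tr p W \<longleftrightarrow> c - p \<in> W"
  unfolding tr_def by (auto simp: image_iff) (metis add_diff_cancel_left' diff_add_cancel add.commute)

lemma tr_change: assumes "vec.subspace W" "c \<in> tr p W" shows "tr c W = tr p W"
proof -
  have cp: "c - p \<in> W" using assms(2) tr_mem_iff by blast
  show ?thesis
  proof (rule set_eqI)
    fix z
    have "z - c \<in> W \<longleftrightarrow> z - p \<in> W"
    proof
      assume "z - c \<in> W"
      then have "(z - c) + (c - p) \<in> W" using cp assms(1) vec.subspace_add by blast
      then show "z - p \<in> W" by simp
    next
      assume "z - p \<in> W"
      then have "(z - p) - (c - p) \<in> W" using cp assms(1) vec.subspace_diff by blast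
      then show "z - c \<in> W" by simp
    qed
    then show "z \<in> tr c W \<longleftrightarrow> z \<in> tr p W" by (simp add: tr_mem_iff)
  qed
qed

lemma affine_tr: "vec.subspace W \<Longrightarrow> affine_subspace (tr p W)"
  unfolding affine_subspace_def tr_def by blast

lemma affine_rep:
  assumes "affine_subspace S"
  shows "vec.subspace (dir S)" "S \<noteq> {}" "c \<in> S \<Longrightarrow> S = tr c (dir S)"
proof -
  obtain p W where W: "vec.subspace W" "S = tr p W"
    using assms unfolding affine_subspace_def tr_def by blast
  then have d: "dir S = W" by (simp add: dir_tr)
  show "vec.subspace (dir S)" using d W by simp
  show "S \<noteq> {}" using W tr_mem_self by blast
  show "c \<in> S \<Longrightarrow> S = tr c (dir S)" using d W tr_change by metis
qed

lemma tr_inter: "tr c U \<inter> tr c W = tr c (U \<inter> W)"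
  unfolding tr_def by auto

lemma tr_subset_iff: "tr p V \<subseteq> tr p U \<longleftrightarrow> V \<subseteq> U"
  unfolding tr_def by auto

lemma card_tr: "card (tr p W) = card W"
  unfolding tr_def by (rule card_image) (auto intro: inj_onI)

lemma subspace_zero: "vec.subspace {0 :: 'a::field ^ 'n}"
  unfolding vec.subspace_def by simp

lemma dim_zero: "vec.dim {0 :: 'a::field ^ 'n} = 0"
  by (simp add: vec.dim_eq_0)



lemma grassmann_ge:
  fixes W Q M :: "('a::{finite,field} ^ 'n) set"
  assumes "vec.subspace W" "vec.subspace Q" "vec.subspace M" "W \<subseteq> M" "Q \<subseteq> M"
  shows "vec.dim W + vec.dim Q \<le> vec.dim M + vec.dim (W \<inter> Q)"
proof -
  have "{x + y |x y. x \<in> W \<and> y \<in> Q} \<subseteq> M"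
    using assms by (auto intro: vec.subspace_add)
  then have "vec.dim {x + y |x y. x \<in> W \<and> y \<in> Q} \<le> vec.dim M" by (rule vec.dim_subset)
  then show ?thesis using vec.dim_sums_Int[OF assms(1,2)] by linarith
qed

lemma step_lemma:
  fixes p b :: "'a::{finite,field} ^ 'n" and V VB :: "('a ^ 'n) set"
  assumes sV: "vec.subspace V" and sVB: "vec.subspace VB" and dVB: "vec.dim VB = k"
    and tk: "t \<le> k"
    and nm: "\<not> meets_t t (tr p V) (tr b VB)"
  shows "\<exists>N. finite N \<and> real (card N) \<le> theta CARD('a) (k - t)
          \<and> (\<forall>L\<in>N. vec.subspace L \<and> V \<subseteq> L \<and> vec.dim L = vec.dim V + 1)
          \<and> (\<forall>A. affine_subspace A \<and> tr p V \<subseteq> A \<and> meets_t t A (tr b VB) \<longrightarrow> (\<exists>L\<in>N. tr p L \<subseteq> A))"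
proof -
  define q where "q = CARD('a)"
  have q2: "q \<ge> 2" unfolding q_def by (rule card_field_ge2)
  define s where "s = vec.dim V"
  define M where "M = vec.span (insert (b - p) (V \<union> VB))"
  have sM: "vec.subspace M" unfolding M_def by simp
  have VM: "V \<subseteq> M" unfolding M_def by (rule subset_trans[OF _ vec.span_superset]) auto
  have VBM: "VB \<subseteq> M" unfolding M_def by (rule subset_trans[OF _ vec.span_superset]) auto
  have bpM: "b - p \<in> M" unfolding M_def by (rule vec.span_base) simp
  define d where "d = min (vec.dim M) (s + (k - t) + 1)"
  have sd: "s \<le> d" unfolding d_def s_def using vec.dim_subset[OF VM] by simp
  have dM: "d \<le> vec.dim M" unfolding d_def by simp
  have "\<exists>W. vec.subspace W \<and> V \<subseteq> W \<and> W \<subseteq> M \<and> vec.dim W = d"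
    by (rule exists_between[OF sV sM VM]) (use sd dM in \<open>simp_all add: s_def\<close>)
  then obtain W where sW: "vec.subspace W" and VW: "V \<subseteq> W" and WM: "W \<subseteq> M" and dW: "vec.dim W = d"
    by blast
  define N where "N = {L. vec.subspace L \<and> V \<subseteq> L \<and> L \<subseteq> W \<and> vec.dim L = vec.dim V + 1}"
  have finN: "finite N" by (rule finite)
  have cardN: "real (card N) \<le> theta q (k - t)"
  proof (cases "d = s")
    case True
    have "N = {}"
    proof (rule ccontr)
      assume "N \<noteq> {}"
      then obtain L where "L \<in> N" by blast
      then have "L \<subseteq> W" "vec.dim L = s + 1" unfolding N_def s_def by auto
      then show False using vec.dim_subset[of L W] dW True by simp
    qed
    then show ?thesis using theta_pos[OF q2, of "k - t"] by simp
  next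
    case False
    then have "vec.dim W = vec.dim V + Suc (d - s - 1)" using sd dW unfolding s_def by simp
    then have "real (card N) = theta q (d - s - 1)"
      unfolding N_def q_def by (rule card_between_real[OF sV sW VW])
    also have "\<dots> \<le> theta q (k - t)" using q2 by (rule theta_mono) (simp add: d_def)
    finally show ?thesis .
  qed
  have main: "\<exists>L\<in>N. tr p L \<subseteq> A" if A: "affine_subspace A" "tr p V \<subseteq> A" "meets_t t A (tr b VB)" for A
  proof -
    define VA where "VA = dir A"
    have sVA: "vec.subspace VA" unfolding VA_def using affine_rep(1)[OF A(1)] .
    have pA: "p \<in> A" using A(2) tr_mem_self[OF sV] by blast
    have Ap: "A = tr p VA" unfolding VA_def using affine_rep(3)[OF A(1) pA] .
    have VVA: "V \<subseteq> VA" using A(2) Ap tr_subset_iff by metis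
    obtain c where cA: "c \<in> A" and cB: "c \<in> tr b VB" using A(3) unfolding meets_t_def by blast
    have Ac: "A = tr c VA" unfolding VA_def using affine_rep(3)[OF A(1) cA] .
    have Bc: "tr b VB = tr c VB" using tr_change[OF sVB cB] by simp
    define Vs where "Vs = VA \<inter> VB"
    have sVs: "vec.subspace Vs" unfolding Vs_def using sVA sVB by (rule vec.subspace_inter)
    have "A \<inter> tr b VB = tr c Vs" unfolding Vs_def using Ac Bc tr_inter by metis
    then have dVs: "vec.dim Vs \<ge> t" using A(3) sVs unfolding meets_t_def by (simp add: adim_tr)
    define Q where "Q = vec.span (insert (c - p) (V \<union> Vs))"
    have sQ: "vec.subspace Q" unfolding Q_def by simp
    have VQ: "V \<subseteq> Q" unfolding Q_def by (rule subset_trans[OF _ vec.span_superset]) auto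
    have VsQ: "Vs \<subseteq> Q" unfolding Q_def by (rule subset_trans[OF _ vec.span_superset]) auto
    have cpQ: "c - p \<in> Q" unfolding Q_def by (rule vec.span_base) simp
    have cpVA: "c - p \<in> VA" using tr_mem_iff Ap cA by blast
    have QVA: "Q \<subseteq> VA" unfolding Q_def using sVA cpVA VVA unfolding Vs_def
      by (intro vec.span_minimal) auto
    have cbVB: "c - b \<in> VB" using cB tr_mem_iff by blast
    have cpM: "c - p \<in> M"
    proof -
      have "c - b \<in> M" using cbVB VBM by blast
      then have "(c - b) + (b - p) \<in> M" using bpM sM vec.subspace_add by blast
      then show ?thesis by simp
    qed
    have QM: "Q \<subseteq> M" unfolding Q_def using sM VM VBM cpM unfolding Vs_def
      by (intro vec.span_minimal) auto
    define S where "S = {x + y |x y. x \<in> Q \<and> y \<in> VB}"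
    have sS: "vec.subspace S" unfolding S_def using sQ sVB by (rule vec.subspace_sums)
    have MS: "M \<subseteq> S"
    proof -
      have "V \<subseteq> S" unfolding S_def using VQ vec.subspace_0[OF sVB] by force
      moreover have "VB \<subseteq> S" unfolding S_def using vec.subspace_0[OF sQ] by force
      moreover have "b - p \<in> S"
      proof -
        have "b - p = (c - p) + (- (c - b))" by simp
        moreover have "- (c - b) \<in> VB" using cbVB sVB vec.subspace_neg by blast
        ultimately show ?thesis unfolding S_def using cpQ by blast
      qed
      ultimately show ?thesis unfolding M_def using sS by (intro vec.span_minimal) auto
    qed
    have "vec.dim M \<le> vec.dim S" using MS by (rule vec.dim_subset)
    moreover have "vec.dim S + vec.dim (Q \<inter> VB) = vec.dim Q + vec.dim VB"
      unfolding S_def by (rule vec.dim_sums_Int[OF sQ sVB])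
    moreover have "vec.dim Vs \<le> vec.dim (Q \<inter> VB)"
      using VsQ unfolding Vs_def by (intro vec.dim_subset) auto
    ultimately have dMQ: "vec.dim M \<le> vec.dim Q + (k - t)" using dVs dVB by linarith
    have QnV: "\<not> Q \<subseteq> V"
    proof
      assume QV: "Q \<subseteq> V"
      have cV: "c \<in> tr p V" using QV cpQ tr_mem_iff by blast
      have "tr p V = tr c V" using tr_change[OF sV cV] by simp
      then have "tr p V \<inter> tr b VB = tr c (V \<inter> VB)" using Bc tr_inter by metis
      moreover have "vec.subspace (V \<inter> VB)" using sV sVB by (rule vec.subspace_inter)
      moreover have "vec.dim Vs \<le> vec.dim (V \<inter> VB)"
        using QV VsQ unfolding Vs_def by (intro vec.dim_subset) auto
      ultimately have "adim (tr p V \<inter> tr b VB) \<ge> t" using dVs adim_tr by (metis le_trans)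
      moreover have "tr p V \<inter> tr b VB \<noteq> {}" using cV cB by blast
      ultimately have "meets_t t (tr p V) (tr b VB)" unfolding meets_t_def by simp
      then show False using nm by simp
    qed
    have dQ: "vec.dim Q \<ge> s + 1"
    proof (rule ccontr)
      assume "\<not> vec.dim Q \<ge> s + 1"
      then have "vec.dim Q \<le> vec.dim V" unfolding s_def by simp
      then have "V = Q" using vec.subspace_dim_equal[OF sV sQ VQ] by simp
      then show False using QnV by simp
    qed
    have "vec.dim W + vec.dim Q \<le> vec.dim M + vec.dim (W \<inter> Q)"
      using grassmann_ge[OF sW sQ sM WM QM] .
    moreover have "vec.dim W + vec.dim Q \<ge> vec.dim M + s + 1"
      using dW dQ dMQ unfolding d_def by linarith
    ultimately have "vec.dim (W \<inter> Q) > vec.dim V" unfolding s_def by linarith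
    then have "\<not> W \<inter> Q \<subseteq> V" using vec.dim_subset[of "W \<inter> Q" V] by linarith
    then obtain u where uW: "u \<in> W" and uQ: "u \<in> Q" and uV: "u \<notin> V" by blast
    define L where "L = vec.span (insert u V)"
    have "V \<subseteq> L" unfolding L_def by (rule subset_trans[OF _ vec.span_superset]) auto
    moreover have "vec.subspace L" unfolding L_def by simp
    moreover have "L \<subseteq> W" unfolding L_def by (rule span_insert_sub_le[OF sW VW uW])
    moreover have "vec.dim L = vec.dim V + 1" unfolding L_def by (rule dim_span_insert_sub[OF sV uV])
    ultimately have "L \<in> N" unfolding N_def by blast
    moreover have "L \<subseteq> VA" unfolding L_def using span_insert_sub_le[OF sVA VVA] uQ QVA by blast
    ultimately show ?thesis using Ap tr_subset_iff by metis
  qed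
  show ?thesis
    apply (rule exI[of _ N])
    using finN cardN main unfolding q_def N_def by blast
qed



lemma psi_le:
  fixes SS :: "('a::field ^ 'n) set set"
  assumes "affine_subspace T" "\<forall>A\<in>SS. meets_t t T A"
  shows "psi t SS \<le> adim T"
  unfolding psi_def by (rule Least_le) (use assms in blast)

lemma chain:
  fixes SS :: "('a::{finite,field} ^ 'n) set set"
  assumes ks: "\<forall>A\<in>SS. kspace k A" and pw: "\<forall>A\<in>SS. \<forall>B\<in>SS. meets_t t A B"
    and ps: "psi t SS = t + x" and tk: "t + x \<le> k"
  shows "j \<le> x \<Longrightarrow> affine_subspace \<tau> \<Longrightarrow> adim \<tau> = t + x - j \<Longrightarrow>
     real (card {A\<in>SS. \<tau> \<subseteq> A}) \<le> theta CARD('a) (k - t) ^ j * qbinom CARD('a) (CARD('n) - t - x) (k - t - x)"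
proof (induction j arbitrary: \<tau>)
  case 0
  obtain p where p\<tau>: "p \<in> \<tau>" using affine_rep(2)[OF 0(2)] by blast
  define V where "V = dir \<tau>"
  have sV: "vec.subspace V" unfolding V_def using affine_rep(1)[OF 0(2)] .
  have \<tau>p: "\<tau> = tr p V" unfolding V_def using affine_rep(3)[OF 0(2) p\<tau>] .
  have dV: "vec.dim V = t + x" using 0(3) unfolding V_def by (simp add: adim_dir)
  define X where "X = {A\<in>SS. \<tau> \<subseteq> A}"
  define U where "U = {U. vec.subspace U \<and> V \<subseteq> U \<and> U \<subseteq> UNIV \<and> vec.dim U = k}"
  have inj: "inj_on dir X"
  proof (rule inj_onI)
    fix A1 A2 assume A: "A1 \<in> X" "A2 \<in> X" "dir A1 = dir A2"
    have "affine_subspace A1" "affine_subspace A2" using A ks unfolding X_def kspace_def by auto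
    moreover have "p \<in> A1" "p \<in> A2" using A p\<tau> unfolding X_def by auto
    ultimately have "A1 = tr p (dir A1)" "A2 = tr p (dir A2)" using affine_rep(3) by metis+
    then show "A1 = A2" using A(3) by simp
  qed
  have img: "dir ` X \<subseteq> U"
  proof
    fix D assume "D \<in> dir ` X"
    then obtain A where A: "A \<in> X" "D = dir A" by blast
    have aA: "affine_subspace A" "adim A = k" using A ks unfolding X_def kspace_def by auto
    have pA: "p \<in> A" using A p\<tau> unfolding X_def by auto
    have "A = tr p (dir A)" using affine_rep(3)[OF aA(1) pA] .
    then have "V \<subseteq> dir A" using A \<tau>p tr_subset_iff unfolding X_def by (metis (no_types, lifting) mem_Collect_eq)
    then show "D \<in> U" unfolding U_def using A aA affine_rep(1)[OF aA(1)] by (simp add: adim_dir)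
  qed
  have "card X = card (dir ` X)" using card_image[OF inj] by simp
  also have "\<dots> \<le> card U" using img by (intro card_mono) (rule finite, assumption)
  finally have "real (card X) \<le> real (card U)" by simp
  also have "\<dots> \<le> qbinom CARD('a) (vec.dim (UNIV :: ('a ^ 'n) set) - vec.dim V) (k - vec.dim V)"
    unfolding U_def by (rule count_sup[OF sV vec.subspace_UNIV]) (use dV tk in auto)
  also have "\<dots> = qbinom CARD('a) (CARD('n) - t - x) (k - t - x)"
  proof -
    have "vec.dim (UNIV :: ('a ^ 'n) set) = CARD('n)" by (rule vec_dim_card)
    then show ?thesis using dV by simp
  qed
  finally show ?case unfolding X_def by simp
next
  case (Suc j)
  define q where "q = CARD('a)"
  have q2: "q \<ge> 2" unfolding q_def by (rule card_field_ge2)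
  define qb where "qb = qbinom CARD('a) (CARD('n) - t - x) (k - t - x)"
  have qb0: "qb \<ge> 0" unfolding qb_def using qbinom_nonneg q2 q_def by simp
  have notall: "\<not> (\<forall>A\<in>SS. meets_t t \<tau> A)"
  proof
    assume "\<forall>A\<in>SS. meets_t t \<tau> A"
    then have "psi t SS \<le> adim \<tau>" using psi_le[OF Suc.prems(2)] by blast
    then show False using ps Suc.prems(1,3) by simp
  qed
  then obtain B where BS: "B \<in> SS" and nm: "\<not> meets_t t \<tau> B" by blast
  have aB: "affine_subspace B" "adim B = k" using BS ks unfolding kspace_def by auto
  obtain b where bB: "b \<in> B" using affine_rep(2)[OF aB(1)] by blast
  define VB where "VB = dir B"
  have sVB: "vec.subspace VB" unfolding VB_def using affine_rep(1)[OF aB(1)] .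
  have Bb: "B = tr b VB" unfolding VB_def using affine_rep(3)[OF aB(1) bB] .
  have dVB: "vec.dim VB = k" using aB(2) unfolding VB_def by (simp add: adim_dir)
  obtain p where p\<tau>: "p \<in> \<tau>" using affine_rep(2)[OF Suc.prems(2)] by blast
  define V where "V = dir \<tau>"
  have sV: "vec.subspace V" unfolding V_def using affine_rep(1)[OF Suc.prems(2)] .
  have \<tau>p: "\<tau> = tr p V" unfolding V_def using affine_rep(3)[OF Suc.prems(2) p\<tau>] .
  have dV: "vec.dim V = t + x - Suc j" using Suc.prems(3) unfolding V_def by (simp add: adim_dir)
  have tk': "t \<le> k" using tk by simp
  obtain N where finN: "finite N" and cN: "real (card N) \<le> theta CARD('a) (k - t)"
    and NL: "\<forall>L\<in>N. vec.subspace L \<and> V \<subseteq> L \<and> vec.dim L = vec.dim V + 1"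
    and NA: "\<forall>A. affine_subspace A \<and> tr p V \<subseteq> A \<and> meets_t t A (tr b VB) \<longrightarrow> (\<exists>L\<in>N. tr p L \<subseteq> A)"
    using step_lemma[OF sV sVB dVB tk', of p b] nm \<tau>p Bb by auto
  have sub: "{A\<in>SS. \<tau> \<subseteq> A} \<subseteq> (\<Union>L\<in>N. {A\<in>SS. tr p L \<subseteq> A})"
  proof
    fix A assume A: "A \<in> {A\<in>SS. \<tau> \<subseteq> A}"
    then have "affine_subspace A" using ks unfolding kspace_def by auto
    moreover have "meets_t t A (tr b VB)" using A pw BS Bb by auto
    ultimately obtain L where "L \<in> N" "tr p L \<subseteq> A" using NA A \<tau>p by auto
    then show "A \<in> (\<Union>L\<in>N. {A\<in>SS. tr p L \<subseteq> A})" using A by auto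
  qed
  have "card {A\<in>SS. \<tau> \<subseteq> A} \<le> card (\<Union>L\<in>N. {A\<in>SS. tr p L \<subseteq> A})"
    using sub by (intro card_mono) (rule finite, assumption)
  also have "\<dots> \<le> (\<Sum>L\<in>N. card {A\<in>SS. tr p L \<subseteq> A})" using finN by (rule card_UN_le)
  finally have "real (card {A\<in>SS. \<tau> \<subseteq> A}) \<le> (\<Sum>L\<in>N. real (card {A\<in>SS. tr p L \<subseteq> A}))"
    by (simp only: of_nat_sum[symmetric] of_nat_le_iff)
  also have "\<dots> \<le> (\<Sum>L\<in>N. theta q (k - t) ^ j * qb)"
  proof (rule sum_mono)
    fix L assume L: "L \<in> N"
    have "affine_subspace (tr p L)" using NL L affine_tr by blast
    moreover have "adim (tr p L) = t + x - j"
    proof -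
      have "vec.subspace L" "vec.dim L = vec.dim V + 1" using NL L by auto
      then show ?thesis using adim_tr[of L p] dV Suc.prems(1) by simp
    qed
    ultimately show "real (card {A\<in>SS. tr p L \<subseteq> A}) \<le> theta q (k - t) ^ j * qb"
      using Suc.IH Suc.prems(1) unfolding q_def qb_def by simp
  qed
  also have "\<dots> = real (card N) * (theta q (k - t) ^ j * qb)" by simp
  also have "\<dots> \<le> theta q (k - t) * (theta q (k - t) ^ j * qb)"
    using cN qb0 theta_pos[OF q2] unfolding q_def by (intro mult_right_mono) auto
  finally show ?case unfolding q_def qb_def by simp
qed



lemma count_tspaces:
  fixes VT :: "('a::{finite,field} ^ 'n) set"
  assumes sVT: "vec.subspace VT" and dVT: "vec.dim VT = t + x"
  shows "real (card {\<tau>. affine_subspace \<tau> \<and> adim \<tau> = t \<and> \<tau> \<subseteq> tr p0 VT})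
           \<le> real CARD('a) ^ x * qbinom CARD('a) (t + x) x"
proof -
  define q where "q = CARD('a)"
  have q2: "q \<ge> 2" unfolding q_def by (rule card_field_ge2)
  define T where "T = tr p0 VT"
  define UU where "UU = {U. vec.subspace U \<and> {0} \<subseteq> U \<and> U \<subseteq> VT \<and> vec.dim U = t}"
  define C where "C U = (\<lambda>c. tr c U) ` T" for U
  have cover: "{\<tau>. affine_subspace \<tau> \<and> adim \<tau> = t \<and> \<tau> \<subseteq> T} \<subseteq> (\<Union>U\<in>UU. C U)"
  proof
    fix \<tau> assume \<tau>: "\<tau> \<in> {\<tau>. affine_subspace \<tau> \<and> adim \<tau> = t \<and> \<tau> \<subseteq> T}"
    then have a\<tau>: "affine_subspace \<tau>" and d\<tau>: "adim \<tau> = t" and \<tau>T: "\<tau> \<subseteq> T" by auto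
    obtain c where c: "c \<in> \<tau>" using affine_rep(2)[OF a\<tau>] by blast
    have \<tau>c: "\<tau> = tr c (dir \<tau>)" using affine_rep(3)[OF a\<tau> c] .
    have cT: "c \<in> T" using c \<tau>T by blast
    have Tc: "T = tr c VT" unfolding T_def using tr_change[OF sVT] cT unfolding T_def by metis
    have "dir \<tau> \<subseteq> VT" using \<tau>T \<tau>c Tc tr_subset_iff by metis
    moreover have "vec.subspace (dir \<tau>)" using affine_rep(1)[OF a\<tau>] .
    moreover have "vec.dim (dir \<tau>) = t" using d\<tau> by (simp add: adim_dir)
    ultimately have "dir \<tau> \<in> UU" unfolding UU_def using vec.subspace_0 by blast
    moreover have "\<tau> \<in> C (dir \<tau>)" unfolding C_def using \<tau>c cT by blast
    ultimately show "\<tau> \<in> (\<Union>U\<in>UU. C U)" by blast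
  qed
  have cardC: "card (C U) = q ^ x" if U: "U \<in> UU" for U
  proof -
    have sU: "vec.subspace U" and UVT: "U \<subseteq> VT" and dU: "vec.dim U = t" using U unfolding UU_def by auto
    have disj: "disjoint (C U)"
    proof (rule disjointI)
      fix X1 X2 assume X: "X1 \<in> C U" "X2 \<in> C U" "X1 \<noteq> X2"
      show "X1 \<inter> X2 = {}"
      proof (rule ccontr)
        assume "X1 \<inter> X2 \<noteq> {}"
        then obtain z where z: "z \<in> X1" "z \<in> X2" by blast
        obtain c1 c2 where "X1 = tr c1 U" "X2 = tr c2 U" using X unfolding C_def by blast
        then have "X1 = tr z U" "X2 = tr z U" using tr_change[OF sU] z by metis+
        then show False using X(3) by simp
      qed
    qed
    have un: "\<Union>(C U) = T"
    proof
      show "\<Union>(C U) \<subseteq> T"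
      proof
        fix z assume "z \<in> \<Union>(C U)"
        then obtain c where c: "c \<in> T" "z \<in> tr c U" unfolding C_def by blast
        have "T = tr c VT" unfolding T_def using tr_change[OF sVT] c(1) unfolding T_def by metis
        then show "z \<in> T" using c(2) UVT tr_subset_iff by blast
      qed
      show "T \<subseteq> \<Union>(C U)"
      proof
        fix c assume "c \<in> T"
        then show "c \<in> \<Union>(C U)" unfolding C_def using tr_mem_self[OF sU] by blast
      qed
    qed
    have "card T = sum card (C U)" unfolding un[symmetric] by (rule card_Union_disjoint[OF disj]) (rule finite)
    also have "\<dots> = sum (\<lambda>_. q ^ t) (C U)"
    proof (rule sum.cong[OF refl])
      fix X assume "X \<in> C U"
      then obtain c where "X = tr c U" unfolding C_def by blast
      then show "card X = q ^ t" using card_tr[of c U] card_subspace[OF sU] dU unfolding q_def by simp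
    qed
    also have "\<dots> = card (C U) * q ^ t" by simp
    finally have e: "card (C U) * q ^ t = q ^ (t + x)"
      unfolding T_def card_tr card_subspace[OF sVT] dVT q_def by simp
    have "card (C U) * q ^ t = q ^ x * q ^ t" using e by (simp add: power_add) blast
    moreover have "q ^ t > 0" using q2 by simp
    ultimately show ?thesis using q2 by auto
  qed
  have "card {\<tau>. affine_subspace \<tau> \<and> adim \<tau> = t \<and> \<tau> \<subseteq> T} \<le> card (\<Union>U\<in>UU. C U)"
    using cover by (intro card_mono) (rule finite, assumption)
  also have "\<dots> \<le> (\<Sum>U\<in>UU. card (C U))" by (rule card_UN_le) (rule finite)
  also have "\<dots> = card UU * q ^ x" using cardC by simp
  finally have "real (card {\<tau>. affine_subspace \<tau> \<and> adim \<tau> = t \<and> \<tau> \<subseteq> T}) \<le> real (card UU) * real q ^ x"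
    by (simp only: of_nat_mult[symmetric] of_nat_power[symmetric] of_nat_le_iff)
  also have "\<dots> \<le> qbinom q (vec.dim VT - vec.dim {0::'a^'n}) (t - vec.dim {0::'a^'n}) * real q ^ x"
  proof (rule mult_right_mono)
    show "real (card UU) \<le> qbinom q (vec.dim VT - vec.dim {0::'a^'n}) (t - vec.dim {0::'a^'n})"
      unfolding UU_def q_def
      by (rule count_sup[OF subspace_zero sVT]) (use sVT vec.subspace_0 dim_zero in auto)
  qed simp
  also have "\<dots> = qbinom q (x + t) t * real q ^ x" using dVT dim_zero by (simp add: add.commute)
  also have "\<dots> = qbinom q (x + t) x * real q ^ x" using qbinom_sym[OF q2, of x t] by simp
  finally show ?thesis unfolding T_def q_def by (simp add: add.commute mult.commute)
qed

theorem mainTheorem13: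
  fixes SS :: "('a::{finite,field} ^ 'n) set set"
    and k t x :: nat
  defines "q \<equiv> CARD('a)" and "n \<equiv> CARD('n)"
  assumes "k > t + 1" and "n > 2 * k - t"
    and "max_t_intersecting k t SS"
    and "psi t SS = t + x" and "x \<ge> 2"
  shows "real (card SS) \<le> real q ^ x * qbinom q (t + x) x * (theta q (k - t)) ^ x
            * qbinom q (n - t - x) (k - t - x)"
proof -
  have q2: "q \<ge> 2" unfolding q_def by (rule card_field_ge2)
  have ks: "\<forall>A\<in>SS. kspace k A" and pw: "\<forall>A\<in>SS. \<forall>B\<in>SS. meets_t t A B"
    using assms(5) unfolding max_t_intersecting_def by auto
  have ps: "psi t SS = t + x" using assms(6) .
  define qb where "qb = qbinom q (n - t - x) (k - t - x)"
  have qb0: "qb \<ge> 0" unfolding qb_def using qbinom_nonneg q2 by simp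
  have th0: "theta q (k - t) \<ge> 0" using theta_pos[OF q2] less_imp_le by blast
  have qbx0: "qbinom q (t + x) x \<ge> 0" using qbinom_nonneg q2 by simp
  show ?thesis
  proof (cases "SS = {}")
    case True
    then show ?thesis using qb0 th0 qbx0 unfolding qb_def by simp
  next
    case False
    then obtain A0 where A0: "A0 \<in> SS" by blast
    have aA0: "affine_subspace A0" "adim A0 = k" using A0 ks unfolding kspace_def by auto
    have "psi t SS \<le> adim A0" using psi_le[OF aA0(1)] pw A0 by blast
    then have txk: "t + x \<le> k" using ps aA0 by simp
    have ex: "\<exists>d T. affine_subspace T \<and> adim T = d \<and> (\<forall>A\<in>SS. meets_t t T A)"
      using aA0 pw A0 by blast
    have "\<exists>T. affine_subspace T \<and> adim T = psi t SS \<and> (\<forall>A\<in>SS. meets_t t T A)"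
      unfolding psi_def by (rule LeastI_ex) (use ex in blast)
    then obtain T where aT: "affine_subspace T" and dT: "adim T = t + x"
      and mT: "\<forall>A\<in>SS. meets_t t T A" using ps by auto
    obtain p0 where p0: "p0 \<in> T" using affine_rep(2)[OF aT] by blast
    define VT where "VT = dir T"
    have sVT: "vec.subspace VT" unfolding VT_def using affine_rep(1)[OF aT] .
    have Tp: "T = tr p0 VT" unfolding VT_def using affine_rep(3)[OF aT p0] .
    have dVT: "vec.dim VT = t + x" using dT unfolding VT_def by (simp add: adim_dir)
    define TT where "TT = {\<tau>. affine_subspace \<tau> \<and> adim \<tau> = t \<and> \<tau> \<subseteq> T}"
    have cover: "SS \<subseteq> (\<Union>\<tau>\<in>TT. {A\<in>SS. \<tau> \<subseteq> A})"
    proof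
      fix A assume A: "A \<in> SS"
      have aA: "affine_subspace A" using A ks unfolding kspace_def by auto
      obtain c where cT: "c \<in> T" and cA: "c \<in> A" using mT A unfolding meets_t_def by blast
      define VA where "VA = dir A"
      have sVA: "vec.subspace VA" unfolding VA_def using affine_rep(1)[OF aA] .
      have Ac: "A = tr c VA" unfolding VA_def using affine_rep(3)[OF aA cA] .
      have Tc: "T = tr c VT" unfolding VT_def using affine_rep(3)[OF aT cT] .
      have sI: "vec.subspace (VT \<inter> VA)" using sVT sVA by (rule vec.subspace_inter)
      have "T \<inter> A = tr c (VT \<inter> VA)" using Tc Ac tr_inter by metis
      then have dI: "vec.dim (VT \<inter> VA) \<ge> t" using mT A adim_tr[OF sI] unfolding meets_t_def by auto
      have "\<exists>U. vec.subspace U \<and> {0} \<subseteq> U \<and> U \<subseteq> VT \<inter> VA \<and> vec.dim U = t"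
        by (rule exists_between[OF subspace_zero sI]) (use sI vec.subspace_0 dim_zero dI in auto)
      then obtain U where sU: "vec.subspace U" and UI: "U \<subseteq> VT \<inter> VA" and dU: "vec.dim U = t" by blast
      have "tr c U \<in> TT" unfolding TT_def
        using affine_tr[OF sU] adim_tr[OF sU] dU UI Tc tr_subset_iff by (metis (mono_tags, lifting) le_inf_iff mem_Collect_eq)
      moreover have "tr c U \<subseteq> A" using UI Ac tr_subset_iff by (metis le_inf_iff)
      ultimately show "A \<in> (\<Union>\<tau>\<in>TT. {A\<in>SS. \<tau> \<subseteq> A})" using A by blast
    qed
    have "card SS \<le> card (\<Union>\<tau>\<in>TT. {A\<in>SS. \<tau> \<subseteq> A})"
      using cover by (intro card_mono) (rule finite, assumption)
    also have "\<dots> \<le> (\<Sum>\<tau>\<in>TT. card {A\<in>SS. \<tau> \<subseteq> A})" by (rule card_UN_le) (rule finite)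
    finally have "real (card SS) \<le> (\<Sum>\<tau>\<in>TT. real (card {A\<in>SS. \<tau> \<subseteq> A}))"
      by (simp only: of_nat_sum[symmetric] of_nat_le_iff)
    also have "\<dots> \<le> (\<Sum>\<tau>\<in>TT. theta q (k - t) ^ x * qb)"
    proof (rule sum_mono)
      fix \<tau> assume "\<tau> \<in> TT"
      then have "affine_subspace \<tau>" "adim \<tau> = t + x - x" unfolding TT_def by auto
      then show "real (card {A\<in>SS. \<tau> \<subseteq> A}) \<le> theta q (k - t) ^ x * qb"
        using chain[OF ks pw ps txk, of x \<tau>] unfolding q_def qb_def n_def by simp
    qed
    also have "\<dots> = real (card TT) * (theta q (k - t) ^ x * qb)" by simp
    also have "\<dots> \<le> (real q ^ x * qbinom q (t + x) x) * (theta q (k - t) ^ x * qb)"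
    proof (rule mult_right_mono)
      show "real (card TT) \<le> real q ^ x * qbinom q (t + x) x"
        unfolding TT_def Tp q_def by (rule count_tspaces[OF sVT dVT])
      show "0 \<le> theta q (k - t) ^ x * qb" using th0 qb0 by simp
    qed
    finally show ?thesis unfolding qb_def by (simp add: mult.assoc)
  qed
qed

end
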